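(* Let $A$ be an $n\times n$ matrix with a designated set of large positions, and let $(X,Y)$ be a restriction with $m=|X|\ge1$ that is $q$-good for some $q<\frac{1}{4m}$. Then $(X,Y)$ has a $0$-strong line, i.e. a row $i\in X$ with $(i,j)$ large for all $j\in Y$, or a column $j\in Y$ with $(i,j)$ large for all $i\in X$.
   Context: Let $A=(a_{ij})_{i,j\in[n]}$ with a designated set $L\subseteq[n]\times[n]$ of large positions. A restriction is $(X,Y)$ with $X,Y\subseteq[n]$, $|X|=|Y|$; a generalized diagonal of $A[X,Y]$ is $\{(i,\sigma(i)):i\in X\}$ for a bijection $\sigma:X\to Y$, random meaning uniform $\sigma$; it is good if it contains exactly one large position; $(X,Y)$ is $q$-good if a random generalized diagonal is good with probability $\ge1-q$. *)

theory Defs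
  imports Complex_Main "HOL-Library.FuncSet"
begin

text \<open>Positions are pairs (i,j) of indices in [n] = {1..n}; the set L of large
positions is all that matters for the notions below.  A restriction is (X,Y)
with X,Y subsets of [n] and card X = card Y.\<close>

definition restriction :: "nat \<Rightarrow> nat set \<Rightarrow> nat set \<Rightarrow> bool" where
  "restriction n X Y \<longleftrightarrow> X \<subseteq> {1..n} \<and> Y \<subseteq> {1..n} \<and> card X = card Y"

text \<open>Bijections X \<rightarrow> Y (as extensional functions, so that there are finitely many);
each such sigma determines the generalized diagonal {(i, sigma i) | i in X}.\<close>
definition bijections :: "nat set \<Rightarrow> nat set \<Rightarrow> (nat \<Rightarrow> nat) set" where
  "bijections X Y = {\<sigma> \<in> X \<rightarrow>\<^sub>E Y. bij_betw \<sigma> X Y}"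

definition gen_diagonal :: "nat set \<Rightarrow> (nat \<Rightarrow> nat) \<Rightarrow> (nat \<times> nat) set" where
  "gen_diagonal X \<sigma> = (\<lambda>i. (i, \<sigma> i)) ` X"

definition good_diagonal :: "(nat \<times> nat) set \<Rightarrow> (nat \<times> nat) set \<Rightarrow> bool" where
  "good_diagonal L D \<longleftrightarrow> card (D \<inter> L) = 1"

definition q_good :: "(nat \<times> nat) set \<Rightarrow> real \<Rightarrow> nat set \<Rightarrow> nat set \<Rightarrow> bool" where
  "q_good L q X Y \<longleftrightarrow>
     real (card {\<sigma> \<in> bijections X Y. good_diagonal L (gen_diagonal X \<sigma>)})
       / real (card (bijections X Y)) \<ge> 1 - q"

definition has_0_strong_line :: "(nat \<times> nat) set \<Rightarrow> nat set \<Rightarrow> nat set \<Rightarrow> bool" where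
  "has_0_strong_line L X Y \<longleftrightarrow>
     (\<exists>i\<in>X. \<forall>j\<in>Y. (i, j) \<in> L) \<or> (\<exists>j\<in>Y. \<forall>i\<in>X. (i, j) \<in> L)"

end

theory Submission
  imports Defs
begin


lemma slice_bij:
  assumes a: "a \<in> X" and u: "u \<in> Y"
  shows "bij_betw (\<lambda>\<sigma>. restrict \<sigma> (X - {a})) {\<sigma> \<in> bijections X Y. \<sigma> a = u}
           (bijections (X - {a}) (Y - {u}))"
proof (rule bij_betw_byWitness[where f' = "\<lambda>\<tau>. \<tau>(a := u)"])
  show "\<forall>\<sigma>\<in>{\<sigma> \<in> bijections X Y. \<sigma> a = u}. (restrict \<sigma> (X - {a}))(a := u) = \<sigma>"
  proof
    fix \<sigma> assume s: "\<sigma> \<in> {\<sigma> \<in> bijections X Y. \<sigma> a = u}"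
    then have ex: "\<sigma> \<in> extensional X" by (simp add: bijections_def PiE_iff)
    show "(restrict \<sigma> (X - {a}))(a := u) = \<sigma>"
    proof
      fix x show "((restrict \<sigma> (X - {a}))(a := u)) x = \<sigma> x"
        using s ex a by (cases "x \<in> X") (auto simp: extensional_def)
    qed
  qed
  show "\<forall>\<tau>\<in>bijections (X - {a}) (Y - {u}). restrict (\<tau>(a := u)) (X - {a}) = \<tau>"
  proof
    fix \<tau> assume t: "\<tau> \<in> bijections (X - {a}) (Y - {u})"
    then have ex: "\<tau> \<in> extensional (X - {a})" by (simp add: bijections_def PiE_iff)
    show "restrict (\<tau>(a := u)) (X - {a}) = \<tau>"
    proof
      fix x show "restrict (\<tau>(a := u)) (X - {a}) x = \<tau> x"
        using ex by (cases "x \<in> X - {a}") (auto simp: extensional_def)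
    qed
  qed
  show "(\<lambda>\<sigma>. restrict \<sigma> (X - {a})) ` {\<sigma> \<in> bijections X Y. \<sigma> a = u} \<subseteq> bijections (X - {a}) (Y - {u})"
  proof
    fix \<tau> assume "\<tau> \<in> (\<lambda>\<sigma>. restrict \<sigma> (X - {a})) ` {\<sigma> \<in> bijections X Y. \<sigma> a = u}"
    then obtain \<sigma> where s: "\<sigma> \<in> bijections X Y" "\<sigma> a = u" and t: "\<tau> = restrict \<sigma> (X - {a})" by auto
    have b: "bij_betw \<sigma> X Y" using s by (simp add: bijections_def)
    have inj: "inj_on \<sigma> X" and im: "\<sigma> ` X = Y" using b by (auto simp: bij_betw_def)
    have im2: "\<sigma> ` (X - {a}) = Y - {u}"
    proof -
      have "\<sigma> ` (X - {a}) = \<sigma> ` X - \<sigma> ` {a}" using inj a by (simp add: inj_on_image_set_diff)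
      then show ?thesis using im s(2) by simp
    qed
    have "bij_betw \<sigma> (X - {a}) (Y - {u})"
      using inj im2 by (simp add: bij_betw_def inj_on_diff)
    moreover have "bij_betw \<tau> (X - {a}) (Y - {u}) = bij_betw \<sigma> (X - {a}) (Y - {u})"
      by (rule bij_betw_cong) (simp add: t)
    ultimately have "bij_betw \<tau> (X - {a}) (Y - {u})" by simp
    moreover have "\<tau> \<in> (X - {a}) \<rightarrow>\<^sub>E (Y - {u})"
      unfolding t restrict_PiE_iff using im2 by blast
    ultimately show "\<tau> \<in> bijections (X - {a}) (Y - {u})" by (simp add: bijections_def)
  qed
  show "(\<lambda>\<tau>. \<tau>(a := u)) ` bijections (X - {a}) (Y - {u}) \<subseteq> {\<sigma> \<in> bijections X Y. \<sigma> a = u}"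
  proof
    fix \<sigma> assume "\<sigma> \<in> (\<lambda>\<tau>. \<tau>(a := u)) ` bijections (X - {a}) (Y - {u})"
    then obtain \<tau> where t: "\<tau> \<in> bijections (X - {a}) (Y - {u})" and s: "\<sigma> = \<tau>(a := u)" by auto
    have b: "bij_betw \<tau> (X - {a}) (Y - {u})" using t by (simp add: bijections_def)
    have inj: "inj_on \<tau> (X - {a})" and im: "\<tau> ` (X - {a}) = Y - {u}" using b by (auto simp: bij_betw_def)
    have e: "\<tau> \<in> (X - {a}) \<rightarrow>\<^sub>E (Y - {u})" using t by (simp add: bijections_def)
    have Xeq: "X = insert a (X - {a})" using a by blast
    have Yeq: "Y = insert u (Y - {u})" using u by blast
    have "bij_betw \<sigma> (X - {a}) (Y - {u}) = bij_betw \<tau> (X - {a}) (Y - {u})"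
      by (rule bij_betw_cong) (simp add: s)
    then have sb: "bij_betw \<sigma> (X - {a}) (Y - {u})" using b by simp
    have "bij_betw \<sigma> (insert a (X - {a})) (insert u (Y - {u}))"
      using sb s a unfolding bij_betw_def by (auto simp: inj_on_def)
    then have "bij_betw \<sigma> X Y" using Xeq Yeq by simp
    moreover have "\<sigma> \<in> X \<rightarrow>\<^sub>E Y"
    proof (rule PiE_I)
      fix x assume "x \<in> X" then show "\<sigma> x \<in> Y" using e s u by (cases "x = a") auto
    next
      fix x assume "x \<notin> X" then show "\<sigma> x = undefined" using e s a by (auto simp: PiE_iff extensional_def)
    qed
    ultimately show "\<sigma> \<in> {\<sigma> \<in> bijections X Y. \<sigma> a = u}" using s by (simp add: bijections_def)
  qed
qed

lemma card_slice:
  assumes "a \<in> X" "u \<in> Y"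
  shows "card {\<sigma> \<in> bijections X Y. \<sigma> a = u} = card (bijections (X - {a}) (Y - {u}))"
  using bij_betw_same_card[OF slice_bij[OF assms]] .

lemma card_slice2:
  assumes "a \<in> X" "u \<in> Y" "k \<in> X" "k \<noteq> a"
  shows "card {\<sigma> \<in> bijections X Y. \<sigma> a = u \<and> \<sigma> k = v}
       = card {\<tau> \<in> bijections (X - {a}) (Y - {u}). \<tau> k = v}"
proof -
  have "bij_betw (\<lambda>\<sigma>. restrict \<sigma> (X - {a})) {\<sigma> \<in> bijections X Y. \<sigma> a = u \<and> \<sigma> k = v}
           {\<tau> \<in> bijections (X - {a}) (Y - {u}). \<tau> k = v}"
  proof (rule bij_betw_subset[OF slice_bij[OF assms(1,2)]])
    show "{\<sigma> \<in> bijections X Y. \<sigma> a = u \<and> \<sigma> k = v} \<subseteq> {\<sigma> \<in> bijections X Y. \<sigma> a = u}" by auto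
    have im: "(\<lambda>\<sigma>. restrict \<sigma> (X - {a})) ` {\<sigma> \<in> bijections X Y. \<sigma> a = u} = bijections (X - {a}) (Y - {u})"
      using slice_bij[OF assms(1,2)] by (simp add: bij_betw_def)
    show "(\<lambda>\<sigma>. restrict \<sigma> (X - {a})) ` {\<sigma> \<in> bijections X Y. \<sigma> a = u \<and> \<sigma> k = v} =
        {\<tau> \<in> bijections (X - {a}) (Y - {u}). \<tau> k = v}"
    proof
      show "(\<lambda>\<sigma>. restrict \<sigma> (X - {a})) ` {\<sigma> \<in> bijections X Y. \<sigma> a = u \<and> \<sigma> k = v}
           \<subseteq> {\<tau> \<in> bijections (X - {a}) (Y - {u}). \<tau> k = v}"
        using im assms(3,4) by auto
      show "{\<tau> \<in> bijections (X - {a}) (Y - {u}). \<tau> k = v} \<subseteq>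
         (\<lambda>\<sigma>. restrict \<sigma> (X - {a})) ` {\<sigma> \<in> bijections X Y. \<sigma> a = u \<and> \<sigma> k = v}"
      proof
        fix \<tau> assume t: "\<tau> \<in> {\<tau> \<in> bijections (X - {a}) (Y - {u}). \<tau> k = v}"
        then obtain \<sigma> where "\<sigma> \<in> {\<sigma> \<in> bijections X Y. \<sigma> a = u}" "\<tau> = restrict \<sigma> (X - {a})"
          using im by (metis (no_types, lifting) CollectD imageE)
        then show "\<tau> \<in> (\<lambda>\<sigma>. restrict \<sigma> (X - {a})) ` {\<sigma> \<in> bijections X Y. \<sigma> a = u \<and> \<sigma> k = v}"
          using t assms(3,4) by auto
      qed
    qed
  qed
  then show ?thesis by (rule bij_betw_same_card)
qed

lemma card_bijections:
  "finite X \<Longrightarrow> finite Y \<Longrightarrow> card X = card Y \<Longrightarrow> card (bijections X Y) = fact (card X)"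
proof (induction "card X" arbitrary: X Y)
  case 0
  then have XY: "X = {}" "Y = {}" by auto
  have "bijections X Y = {\<lambda>_. undefined}"
  proof
    show "bijections X Y \<subseteq> {\<lambda>_. undefined}" unfolding bijections_def XY by auto
    show "{\<lambda>_. undefined} \<subseteq> bijections X Y" unfolding bijections_def XY by (simp add: bij_betw_def)
  qed
  then show ?case using 0 by simp
next
  case (Suc m)
  then have "X \<noteq> {}" by auto
  then obtain a where a: "a \<in> X" by blast
  have eq: "bijections X Y = (\<Union>u\<in>Y. {\<sigma> \<in> bijections X Y. \<sigma> a = u})"
  proof
    show "bijections X Y \<subseteq> (\<Union>u\<in>Y. {\<sigma> \<in> bijections X Y. \<sigma> a = u})"
    proof
      fix \<sigma> assume s: "\<sigma> \<in> bijections X Y"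
      then have "\<sigma> a \<in> Y" using a unfolding bijections_def by (simp add: PiE_iff)
      then show "\<sigma> \<in> (\<Union>u\<in>Y. {\<sigma> \<in> bijections X Y. \<sigma> a = u})" using s by blast
    qed
  qed blast
  have fin: "finite (bijections X Y)"
  proof (rule finite_subset)
    show "bijections X Y \<subseteq> X \<rightarrow>\<^sub>E Y" unfolding bijections_def by blast
    show "finite (X \<rightarrow>\<^sub>E Y)" using Suc.prems by (simp add: finite_PiE)
  qed
  have "card (bijections X Y) = card (\<Union>u\<in>Y. {\<sigma> \<in> bijections X Y. \<sigma> a = u})"
    by (rule arg_cong[OF eq])
  also have "\<dots> = (\<Sum>u\<in>Y. card {\<sigma> \<in> bijections X Y. \<sigma> a = u})"
  proof (rule card_UN_disjoint)
    show "finite Y" by (rule Suc.prems)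
    show "\<forall>u\<in>Y. finite {\<sigma> \<in> bijections X Y. \<sigma> a = u}" using fin by (simp del: bijections_def)
    show "\<forall>u\<in>Y. \<forall>v\<in>Y. u \<noteq> v \<longrightarrow> {\<sigma> \<in> bijections X Y. \<sigma> a = u} \<inter> {\<sigma> \<in> bijections X Y. \<sigma> a = v} = {}"
      by blast
  qed
  also have "\<dots> = (\<Sum>u\<in>Y. fact m)"
  proof (rule sum.cong)
    fix u assume u: "u \<in> Y"
    have "card {\<sigma> \<in> bijections X Y. \<sigma> a = u} = card (bijections (X - {a}) (Y - {u}))"
      by (rule card_slice[OF a u])
    also have "\<dots> = fact (card (X - {a}))"
    proof (rule Suc.hyps(1))
      show "m = card (X - {a})" using Suc.hyps(2) a Suc.prems(1) by simp
      show "finite (X - {a})" "finite (Y - {u})" using Suc.prems by auto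
      show "card (X - {a}) = card (Y - {u})" using Suc.prems a u by simp
    qed
    also have "\<dots> = fact m"
    proof -
      have "card (X - {a}) = m" using Suc.hyps(2) a Suc.prems(1) by simp
      then show ?thesis by simp
    qed
    finally show "card {\<sigma> \<in> bijections X Y. \<sigma> a = u} = fact m" .
  qed simp
  also have "\<dots> = fact (card X)" using Suc.hyps(2) Suc.prems by (metis fact_Suc sum_constant of_nat_id)
  finally show ?case .
qed



lemma good_iff:
  assumes "finite X"
  shows "good_diagonal L (gen_diagonal X \<sigma>) \<longleftrightarrow> card {i \<in> X. (i, \<sigma> i) \<in> L} = 1"
proof -
  have "gen_diagonal X \<sigma> \<inter> L = (\<lambda>i. (i, \<sigma> i)) ` {i \<in> X. (i, \<sigma> i) \<in> L}"
    unfolding gen_diagonal_def by blast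
  moreover have "inj_on (\<lambda>i. (i, \<sigma> i)) {i \<in> X. (i, \<sigma> i) \<in> L}" by (simp add: inj_on_def)
  ultimately have "card (gen_diagonal X \<sigma> \<inter> L) = card {i \<in> X. (i, \<sigma> i) \<in> L}"
    by (simp add: card_image)
  then show ?thesis by (simp add: good_diagonal_def)
qed

lemma two_bad:
  assumes "finite X" "a \<in> X" "k \<in> X" "a \<noteq> k" "(a, \<sigma> a) \<in> L" "(k, \<sigma> k) \<in> L"
  shows "\<not> good_diagonal L (gen_diagonal X \<sigma>)"
proof -
  have "{a, k} \<subseteq> {i \<in> X. (i, \<sigma> i) \<in> L}" using assms by auto
  then have "card {a, k} \<le> card {i \<in> X. (i, \<sigma> i) \<in> L}"
    by (rule card_mono[rotated]) (use assms(1) in simp)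
  then have "2 \<le> card {i \<in> X. (i, \<sigma> i) \<in> L}" using assms(4) by simp
  then show ?thesis using good_iff[OF assms(1)] by simp
qed

lemma swap_in:
  assumes s: "\<sigma> \<in> bijections X Y" and a: "a \<in> X" and k: "k \<in> X"
  shows "\<sigma>(a := \<sigma> k, k := \<sigma> a) \<in> bijections X Y"
proof -
  have b: "bij_betw \<sigma> X Y" and e: "\<sigma> \<in> X \<rightarrow>\<^sub>E Y" using s by (auto simp: bijections_def)
  have inj: "inj_on \<sigma> X" and im: "\<sigma> ` X = Y" using b by (auto simp: bij_betw_def)
  let ?t = "\<sigma>(a := \<sigma> k, k := \<sigma> a)"
  have "inj_on ?t X"
  proof (rule inj_onI)
    fix x y assume "x \<in> X" "y \<in> X" "?t x = ?t y"
    then show "x = y" using inj a k unfolding inj_on_def by (auto split: if_splits)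
  qed
  moreover have "?t ` X = Y"
  proof
    show "?t ` X \<subseteq> Y" using im a k by auto
    show "Y \<subseteq> ?t ` X"
    proof
      fix y assume "y \<in> Y"
      then obtain x where x: "x \<in> X" "y = \<sigma> x" using im by auto
      show "y \<in> ?t ` X"
      proof (cases "x = a")
        case True then show ?thesis using x k by (auto intro!: image_eqI[of _ _ k])
      next
        case F1: False
        show ?thesis
        proof (cases "x = k")
          case True then show ?thesis using x a by (auto intro!: image_eqI[of _ _ a])
        next
          case False then show ?thesis using x F1 by (auto intro!: image_eqI[of _ _ x])
        qed
      qed
    qed
  qed
  moreover have "?t \<in> X \<rightarrow>\<^sub>E Y" using e a k by (auto simp: PiE_iff extensional_def)
  ultimately show ?thesis by (simp add: bijections_def bij_betw_def)
qed

lemma pair_lemma: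
  assumes fX: "finite X" and fY: "finite Y"
    and a: "a \<in> X" and k: "k \<in> X" and ak: "a \<noteq> k" and uv: "u \<noteq> v"
    and L1: "(a, u) \<in> L" and L2: "(a, v) \<notin> L" and L3: "(k, u) \<notin> L"
  shows "card {\<sigma> \<in> bijections X Y. \<sigma> a = u \<and> \<sigma> k = v}
    \<le> card ({\<sigma> \<in> bijections X Y. \<not> good_diagonal L (gen_diagonal X \<sigma>)} \<inter>
             ({\<sigma> \<in> bijections X Y. \<sigma> a = u \<and> \<sigma> k = v} \<union> {\<sigma> \<in> bijections X Y. \<sigma> a = v \<and> \<sigma> k = u}))"
proof -
  let ?P = "{\<sigma> \<in> bijections X Y. \<sigma> a = u \<and> \<sigma> k = v}"
  let ?P' = "{\<sigma> \<in> bijections X Y. \<sigma> a = v \<and> \<sigma> k = u}"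
  let ?bad = "{\<sigma> \<in> bijections X Y. \<not> good_diagonal L (gen_diagonal X \<sigma>)}"
  define sw where "sw \<sigma> = \<sigma>(a := \<sigma> k, k := \<sigma> a)" for \<sigma> :: "nat \<Rightarrow> nat"
  define f where "f \<sigma> = (if good_diagonal L (gen_diagonal X \<sigma>) then sw \<sigma> else \<sigma>)" for \<sigma>
  have swinv: "sw (sw \<sigma>) = \<sigma>" for \<sigma> unfolding sw_def using ak by (auto simp: fun_eq_iff)
  have swbad: "\<not> good_diagonal L (gen_diagonal X (sw \<sigma>))"
    if s: "\<sigma> \<in> ?P" and g: "good_diagonal L (gen_diagonal X \<sigma>)" for \<sigma>
  proof -
    have c1: "card {i \<in> X. (i, \<sigma> i) \<in> L} = 1" using g good_iff[OF fX] by simp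
    have "a \<in> {i \<in> X. (i, \<sigma> i) \<in> L}" using s a L1 by simp
    then have C: "{i \<in> X. (i, \<sigma> i) \<in> L} = {a}" using c1 by (metis card_1_singletonE singletonD)
    have "{i \<in> X. (i, sw \<sigma> i) \<in> L} = {}"
    proof (rule ccontr)
      assume "{i \<in> X. (i, sw \<sigma> i) \<in> L} \<noteq> {}"
      then obtain i where i: "i \<in> X" "(i, sw \<sigma> i) \<in> L" by blast
      show False
      proof (cases "i = a \<or> i = k")
        case True then show False using i s L2 L3 ak unfolding sw_def by auto
      next
        case False
        then have "(i, \<sigma> i) \<in> L" using i unfolding sw_def by auto
        then have "i \<in> {i \<in> X. (i, \<sigma> i) \<in> L}" using i by simp
        then show False using C False by simp
      qed
    qed
    then have "card {i \<in> X. (i, sw \<sigma> i) \<in> L} = 0" by (simp only: card.empty)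
    then show ?thesis using good_iff[OF fX, of L "sw \<sigma>"] by simp
  qed
  have fin: "finite (bijections X Y)"
  proof (rule finite_subset)
    show "bijections X Y \<subseteq> X \<rightarrow>\<^sub>E Y" unfolding bijections_def by blast
    show "finite (X \<rightarrow>\<^sub>E Y)" using fX fY by (simp add: finite_PiE)
  qed
  have "inj_on f ?P"
  proof (rule inj_onI)
    fix s t assume s: "s \<in> ?P" and t: "t \<in> ?P" and st: "f s = f t"
    show "s = t"
    proof (cases "good_diagonal L (gen_diagonal X s)")
      case gs: True
      show ?thesis
      proof (cases "good_diagonal L (gen_diagonal X t)")
        case True
        then have "sw s = sw t" using st gs unfolding f_def by simp
        then show ?thesis by (metis swinv)
      next
        case False
        then have "sw s = t" using st gs unfolding f_def by simp
        then have "sw s a = t a" by simp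
        then show ?thesis using s t uv ak unfolding sw_def by simp
      qed
    next
      case gs: False
      show ?thesis
      proof (cases "good_diagonal L (gen_diagonal X t)")
        case True
        then have "s = sw t" using st gs unfolding f_def by simp
        then have "s a = sw t a" by simp
        then show ?thesis using s t uv ak unfolding sw_def by simp
      next
        case False
        then show ?thesis using st gs unfolding f_def by simp
      qed
    qed
  qed
  moreover have "f ` ?P \<subseteq> ?bad \<inter> (?P \<union> ?P')"
  proof
    fix \<tau> assume "\<tau> \<in> f ` ?P"
    then obtain \<sigma> where s: "\<sigma> \<in> ?P" and t: "\<tau> = f \<sigma>" by blast
    show "\<tau> \<in> ?bad \<inter> (?P \<union> ?P')"
    proof (cases "good_diagonal L (gen_diagonal X \<sigma>)")
      case True
      then have "\<tau> = sw \<sigma>" using t unfolding f_def by simp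
      moreover have "sw \<sigma> \<in> bijections X Y" using s a k swap_in unfolding sw_def by blast
      moreover have "sw \<sigma> a = v" "sw \<sigma> k = u" using s ak unfolding sw_def by auto
      ultimately show ?thesis using swbad[OF s True] by simp
    next
      case False
      then show ?thesis using s t unfolding f_def by simp
    qed
  qed
  moreover have "finite (?bad \<inter> (?P \<union> ?P'))" using fin by simp
  ultimately show ?thesis by (rule card_inj_on_le)
qed

lemma family_count:
  assumes "finite S" "finite K"
    and "\<And>k j. k \<in> K \<Longrightarrow> j \<in> K \<Longrightarrow> k \<noteq> j \<Longrightarrow> T k \<inter> T j = {}"
    and "\<And>k. k \<in> K \<Longrightarrow> c \<le> card (S \<inter> T k)"
  shows "card K * c \<le> card S"
proof -
  have "card K * c = (\<Sum>k\<in>K. c)" by simp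
  also have "\<dots> \<le> (\<Sum>k\<in>K. card (S \<inter> T k))" by (rule sum_mono) (rule assms(4))
  also have "\<dots> = card (\<Union>k\<in>K. S \<inter> T k)"
    by (rule card_UN_disjoint[symmetric]) (use assms in auto)
  also have "\<dots> \<le> card S" by (rule card_mono) (use assms in auto)
  finally show ?thesis .
qed



lemma card_P:
  assumes fX: "finite X" and fY: "finite Y" and cXY: "card X = card Y"
    and a: "a \<in> X" and k: "k \<in> X" and ak: "a \<noteq> k" and u: "u \<in> Y" and v: "v \<in> Y" and uv: "u \<noteq> v"
  shows "card {\<sigma> \<in> bijections X Y. \<sigma> a = u \<and> \<sigma> k = v} = fact (card X - 2)"
proof -
  have "card {\<sigma> \<in> bijections X Y. \<sigma> a = u \<and> \<sigma> k = v}
      = card {\<tau> \<in> bijections (X - {a}) (Y - {u}). \<tau> k = v}"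
    by (rule card_slice2) (use a u k ak in auto)
  also have "\<dots> = card (bijections (X - {a} - {k}) (Y - {u} - {v}))"
    by (rule card_slice) (use k ak v uv in auto)
  also have "\<dots> = fact (card (X - {a} - {k}))"
    by (rule card_bijections) (use fX fY cXY a k ak u v uv in auto)
  also have "card (X - {a} - {k}) = card X - 2" using fX a k ak by simp
  finally show ?thesis .
qed

theorem lemma2p15:
  fixes n :: nat and A :: "nat \<Rightarrow> nat \<Rightarrow> real" and L :: "(nat \<times> nat) set"
    and X Y :: "nat set" and q :: real
  assumes "L \<subseteq> {1..n} \<times> {1..n}"
    and "restriction n X Y"
    and "card X \<ge> 1"
    and "q_good L q X Y"
    and "q < 1 / (4 * real (card X))"
  shows "has_0_strong_line L X Y"
proof (rule ccontr)
  assume nl: "\<not> has_0_strong_line L X Y"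
  have fX: "finite X" and fY: "finite Y" and cXY: "card X = card Y"
    using assms(2) unfolding restriction_def by (auto intro: finite_subset)
  define m where "m = card X"
  have m1: "m \<ge> 1" using assms(3) m_def by simp
  let ?B = "bijections X Y"
  let ?good = "\<lambda>\<sigma>. good_diagonal L (gen_diagonal X \<sigma>)"
  define G where "G = {\<sigma> \<in> ?B. ?good \<sigma>}"
  define Bd where "Bd = {\<sigma> \<in> ?B. \<not> ?good \<sigma>}"
  have fin: "finite ?B"
  proof (rule finite_subset)
    show "?B \<subseteq> X \<rightarrow>\<^sub>E Y" unfolding bijections_def by blast
    show "finite (X \<rightarrow>\<^sub>E Y)" using fX fY by (simp add: finite_PiE)
  qed
  have cB: "card ?B = fact m" using card_bijections[OF fX fY cXY] m_def by simp
  have split: "card G + card Bd = card ?B"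
  proof -
    have "G \<union> Bd = ?B" "G \<inter> Bd = {}" unfolding G_def Bd_def by auto
    moreover have "finite G" "finite Bd" using fin unfolding G_def Bd_def by auto
    ultimately show ?thesis using card_Un_disjoint[of G Bd] by simp
  qed
  have qg: "real (card G) / real (card ?B) \<ge> 1 - q"
    using assms(4) unfolding q_good_def G_def by simp
  have Bpos: "real (card ?B) > 0" using cB by simp
  have q14: "q < 1/4"
  proof -
    have "1 / (4 * real (card X)) \<le> 1/4" using assms(3) by (simp add: field_simps)
    then show ?thesis using assms(5) by simp
  qed
  have "card G > 0"
  proof (rule ccontr)
    assume "\<not> card G > 0"
    then have "card G = 0" by simp
    then show False using qg q14 by simp
  qed
  then have "G \<noteq> {}" by auto
  then obtain \<sigma>0 where s0: "\<sigma>0 \<in> G" by blast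
  have "card {i \<in> X. (i, \<sigma>0 i) \<in> L} = 1" using s0 good_iff[OF fX] unfolding G_def by simp
  then obtain a where "{i \<in> X. (i, \<sigma>0 i) \<in> L} = {a}" by (rule card_1_singletonE)
  then have a: "a \<in> X" "(a, \<sigma>0 a) \<in> L" by blast+
  define e where "e = \<sigma>0 a"
  have e: "e \<in> Y" using s0 a unfolding G_def bijections_def e_def by (auto simp: PiE_iff)
  have aeL: "(a, e) \<in> L" using a e_def by simp
  obtain d where d: "d \<in> Y" "(a, d) \<notin> L" using nl a unfolding has_0_strong_line_def by blast
  obtain c where c: "c \<in> X" "(c, e) \<notin> L" using nl e unfolding has_0_strong_line_def by blast
  have de: "d \<noteq> e" using d aeL by auto
  have ca: "c \<noteq> a" using c aeL by auto
  have m2: "m \<ge> 2"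
  proof -
    have "{a, c} \<subseteq> X" using a c by auto
    then have "card {a, c} \<le> m" unfolding m_def using fX by (rule card_mono[rotated])
    then show ?thesis using ca by simp
  qed
  define f :: nat where "f = fact (m - 2)"
  define P where "P = (\<lambda>k u v. {\<sigma> \<in> ?B. \<sigma> a = u \<and> \<sigma> k = v})"
  have cP: "card (P k u v) = f" if "k \<in> X" "k \<noteq> a" "u \<in> Y" "v \<in> Y" "u \<noteq> v" for k u v
    unfolding P_def f_def m_def by (rule card_P) (use fX fY cXY a that in auto)
  have Pdef: "\<sigma> \<in> P k u v \<longleftrightarrow> \<sigma> \<in> ?B \<and> \<sigma> a = u \<and> \<sigma> k = v" for \<sigma> k u v
    unfolding P_def by simp
  have injB: "inj_on \<sigma> X" if "\<sigma> \<in> ?B" for \<sigma> using that unfolding bijections_def bij_betw_def by simp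
  have fact_eq: "fact (m - 1) = (m - 1) * f"
  proof -
    have "m - 1 = Suc (m - 2)" using m2 by simp
    then show ?thesis unfolding f_def by (simp only: fact_Suc) simp
  qed
  have key: "fact (m - 1) \<le> 2 * card Bd"
  proof (cases "\<exists>b\<in>Y. b \<noteq> e \<and> (a, b) \<in> L")
    case True
    then obtain b where b: "b \<in> Y" "b \<noteq> e" "(a, b) \<in> L" by blast
    define K1 where "K1 = {k \<in> X - {a}. (k, e) \<notin> L}"
    define K2 where "K2 = {k \<in> X - {a}. (k, e) \<in> L}"
    have h1: "card K1 * f \<le> card Bd"
    proof (rule family_count[where T = "\<lambda>k. P k e d \<union> P k d e"])
      show "finite Bd" unfolding Bd_def using fin by simp
      show "finite K1" unfolding K1_def using fX by simp
      show "(P k e d \<union> P k d e) \<inter> (P j e d \<union> P j d e) = {}" if "k \<in> K1" "j \<in> K1" "k \<noteq> j" for k j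
      proof (rule ccontr)
        assume "(P k e d \<union> P k d e) \<inter> (P j e d \<union> P j d e) \<noteq> {}"
        then obtain \<sigma> where s: "\<sigma> \<in> P k e d \<union> P k d e" "\<sigma> \<in> P j e d \<union> P j d e" by blast
        then have sB: "\<sigma> \<in> ?B" by (auto simp: Pdef)
        have "\<sigma> k = \<sigma> j \<or> \<sigma> k = \<sigma> a \<or> \<sigma> j = \<sigma> a" using s by (auto simp: Pdef)
        moreover have "k \<in> X" "j \<in> X" "k \<noteq> a" "j \<noteq> a" using that unfolding K1_def by auto
        ultimately show False using injB[OF sB] a(1) that(3) by (blast dest: inj_onD)
      qed
      show "f \<le> card (Bd \<inter> (P k e d \<union> P k d e))" if "k \<in> K1" for k
      proof -
        have k: "k \<in> X" "k \<noteq> a" "(k, e) \<notin> L" using that unfolding K1_def by auto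
        have "f = card (P k e d)" using cP[of k e d] k e d de by simp
        also have "\<dots> \<le> card (Bd \<inter> (P k e d \<union> P k d e))"
          unfolding P_def Bd_def
          by (rule pair_lemma) (use fX fY a k de aeL d in auto)
        finally show ?thesis .
      qed
    qed
    have h2: "card K2 * f \<le> card Bd"
    proof (rule family_count[where T = "\<lambda>k. P k b e"])
      show "finite Bd" unfolding Bd_def using fin by simp
      show "finite K2" unfolding K2_def using fX by simp
      show "P k b e \<inter> P j b e = {}" if "k \<in> K2" "j \<in> K2" "k \<noteq> j" for k j
      proof (rule ccontr)
        assume "P k b e \<inter> P j b e \<noteq> {}"
        then obtain \<sigma> where s: "\<sigma> \<in> P k b e" "\<sigma> \<in> P j b e" by blast
        then have sB: "\<sigma> \<in> ?B" by (auto simp: Pdef)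
        have "\<sigma> k = \<sigma> j" using s by (auto simp: Pdef)
        moreover have "k \<in> X" "j \<in> X" using that unfolding K2_def by auto
        ultimately show False using injB[OF sB] that(3) by (blast dest: inj_onD)
      qed
      show "f \<le> card (Bd \<inter> P k b e)" if "k \<in> K2" for k
      proof -
        have k: "k \<in> X" "k \<noteq> a" "(k, e) \<in> L" using that unfolding K2_def by auto
        have "P k b e \<subseteq> Bd"
        proof
          fix \<sigma> assume s: "\<sigma> \<in> P k b e"
          have "\<not> ?good \<sigma>" by (rule two_bad[OF fX a(1) k(1)]) (use k s b in \<open>auto simp: Pdef\<close>)
          then show "\<sigma> \<in> Bd" using s unfolding Bd_def by (auto simp: Pdef)
        qed
        then have "Bd \<inter> P k b e = P k b e" by blast
        then show ?thesis using cP[of k b e] k b e by simp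
      qed
    qed
    have h3: "card K1 + card K2 = m - 1"
    proof -
      have "K1 \<union> K2 = X - {a}" "K1 \<inter> K2 = {}" unfolding K1_def K2_def by auto
      moreover have "finite K1" "finite K2" unfolding K1_def K2_def using fX by auto
      ultimately have "card K1 + card K2 = card (X - {a})" using card_Un_disjoint[of K1 K2] by simp
      then show ?thesis using a fX m_def by simp
    qed
    have "(m - 1) * f = card K1 * f + card K2 * f"
      by (simp only: h3[symmetric] add_mult_distrib)
    then have "(m - 1) * f \<le> 2 * card Bd" using h1 h2 by linarith
    then show ?thesis using fact_eq by simp
  next
    case False
    define K where "K = Y - {e}"
    have "card K * f \<le> card Bd"
    proof (rule family_count[where T = "\<lambda>g. P c e g \<union> P c g e"])
      show "finite Bd" unfolding Bd_def using fin by simp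
      show "finite K" unfolding K_def using fY by simp
      show "(P c e g \<union> P c g e) \<inter> (P c e j \<union> P c j e) = {}" if "g \<in> K" "j \<in> K" "g \<noteq> j" for g j
      proof (rule ccontr)
        assume "(P c e g \<union> P c g e) \<inter> (P c e j \<union> P c j e) \<noteq> {}"
        then obtain \<sigma> where s: "\<sigma> \<in> P c e g \<union> P c g e" "\<sigma> \<in> P c e j \<union> P c j e" by blast
        have "g \<noteq> e" "j \<noteq> e" using that unfolding K_def by auto
        then show False using s that(3) by (auto simp: Pdef)
      qed
      show "f \<le> card (Bd \<inter> (P c e g \<union> P c g e))" if "g \<in> K" for g
      proof -
        have g: "g \<in> Y" "g \<noteq> e" using that unfolding K_def by auto
        have gL: "(a, g) \<notin> L" using False g by auto
        have "f = card (P c e g)" using cP[of c e g] c ca e g by simp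
        also have "\<dots> \<le> card (Bd \<inter> (P c e g \<union> P c g e))"
          unfolding P_def Bd_def
          by (rule pair_lemma) (use fX fY a c ca g gL aeL in auto)
        finally show ?thesis .
      qed
    qed
    moreover have "card K = m - 1" unfolding K_def m_def using fY e cXY by simp
    ultimately show ?thesis using fact_eq by simp
  qed
  have "real (card Bd) / real (card ?B) \<le> q"
    using qg split Bpos by (simp add: field_simps)
  moreover have "real (card ?B) = real m * real (fact (m - 1))"
  proof -
    have "fact m = m * fact (m - 1)" using m1 by (simp add: fact_reduce)
    then show ?thesis using cB by simp
  qed
  ultimately have "real (card Bd) \<le> q * (real m * real (fact (m - 1)))"
    using Bpos by (simp add: field_simps)
  moreover have "real (fact (m - 1)) \<le> 2 * real (card Bd)"
  proof -
    have "real (fact (m - 1)) \<le> real (2 * card Bd)" using key by (simp only: of_nat_le_iff)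
    then show ?thesis by simp
  qed
  ultimately have F1: "real (fact (m - 1)) \<le> 2 * (q * (real m * real (fact (m - 1))))"
    by linarith
  have Fpos: "real (fact (m - 1)) > 0" by simp
  have "q * (4 * real m) < 1" using assms(5) m1 m_def by (simp add: field_simps)
  then have "2 * q * real m < 1" by linarith
  then have "(2 * q * real m) * real (fact (m - 1)) < 1 * real (fact (m - 1))"
    using Fpos by (rule mult_strict_right_mono)
  moreover have "2 * (q * (real m * real (fact (m - 1)))) = (2 * q * real m) * real (fact (m - 1))"
    by (simp add: algebra_simps)
  ultimately show False using F1 by linarith
qed

end
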